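(* Let $\mathbf X\in\mathscr C^p_\omega([0,T],\mathcal M)$. (1) If $\boldsymbol H\in\mathscr D_X(\mathbb R^{e\times d})$ satisfies $\boldsymbol H=\boldsymbol H\cdot\boldsymbol Q(X)$, then $\int\boldsymbol H\,d_{\mathcal M}\mathbf X=0$ as a rough path. (2) Consequently, if $\boldsymbol H,\boldsymbol K\in\mathscr D_X(\mathbb R^{e\times d})$ satisfy $\boldsymbol K-\boldsymbol H=(\boldsymbol K-\boldsymbol H)\cdot\boldsymbol Q(X)$, then $\int\boldsymbol H\,d_{\mathcal M}\mathbf X=\int\boldsymbol K\,d_{\mathcal M}\mathbf X$ as rough paths.
   Context: Let $\mathcal M\subseteq\mathbb R^d$ be an embedded smooth submanifold, $\Pi$ the nearest-point (Riemannian) projection onto $\mathcal M$, defined and smooth on a tubular neighbourhood $A$ of $\mathcal M$ (so $\Pi\circ\Pi=\Pi$, $\Pi|_{\mathcal M}=\mathrm{id}$). Set $P:=D\Pi$ and $Q:=I_d-D\Pi$ on $A$; for $y\in\mathcal M$, $P(y)$ and $Q(y)$ are the orthogonal projections onto the tangent and normal spaces. Fix $p\in[1,3)$ and a control $\omega$. Euclidean rough paths $\mathbf X=(X,\mathbb X)$ ($|X_{st}|\lesssim\omega^{1/p}$, $|\mathbb X_{st}|\lesssim\omega^{2/p}$, Chen's identity $\mathbb X^{ab}_{st}=\mathbb X^{ab}_{su}+X^a_{su}X^b_{ut}+\mathbb X^{ab}_{ut}$); controlled paths $(H,H')$ with $H_{st}-H'_sX_{st}=O(\omega^{2/p})$,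 matrix-valued ones with differentiation index first (for $\boldsymbol H\in\mathscr D_X(\mathbb R^{e\times d})$: trace $H_b$, derivative $H'_{ab}$); rough integral $\int\boldsymbol H\,d\mathbf X=\lim\sum H_{c;u}X^c_{uv}+H'_{ab;u}\mathbb X^{ab}_{uv}$, viewed as rough path via the lift with second order part $\approx H^i_{a;s}H^j_{b;s}\mathbb X^{ab}_{st}$ ($\approx$ = up to $o(\omega(s,t))$). Pushforward $\Pi_*\mathbf X$: rough path with trace $\Pi(X)$ and second order part $\approx\partial_a\Pi^c\partial_b\Pi^d(X_s)\mathbb X^{ab}_{st}$. $\mathscr C^p_\omega([0,T],\mathcal M)$ is the set of rough paths with trace in $\mathcal M$ and $\Pi_*\mathbf X=\mathbf X$. Pullback: $\Pi^*\boldsymbol H=(H_c\partial_b\Pi^c(X),\,H'_{ij}\partial_a\Pi^i\partial_b\Pi^j(X)+H_c\partial_{ab}\Pi^c(X))$. Constrained rough integral: $\int\boldsymbol H\,d_{\mathcal M}\mathbf X:=\int\Pi^*\boldsymbol H\,d\mathbf X$. $\boldsymbol Q(X)$ is the $X$-controlled path $(Q^c_b(X),\partial_aQ^c_b(X))=(Q^c_b(X),-\partial_{ab}\Pi^c(X))$, and the Leibniz product is $\boldsymbol H\cdot\boldsymbol Q(X)=(H_cQ^c_b(X),\,H'_{ac}Q^c_b(X)+H_c\partial_aQ^c_b(X))$. *)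

theory Defs
  imports "HOL-Analysis.Analysis"
begin

fun Ck_on :: "nat \<Rightarrow> 'a::real_normed_vector set \<Rightarrow> ('a \<Rightarrow> 'b::real_normed_vector) \<Rightarrow> bool" where
  "Ck_on 0 S f = continuous_on S f"
| "Ck_on (Suc k) S f =
     ((\<forall>x\<in>S. f differentiable (at x)) \<and>
      (\<forall>v. Ck_on k S (\<lambda>x. frechet_derivative f (at x) v)))"

definition smooth_on :: "'a::real_normed_vector set \<Rightarrow> ('a \<Rightarrow> 'b::real_normed_vector) \<Rightarrow> bool" where
  "smooth_on S f \<longleftrightarrow> (\<forall>k. Ck_on k S f)"

definition embedded_submanifold :: "'a::euclidean_space set \<Rightarrow> bool" where
  "embedded_submanifold M \<longleftrightarrow>
     (\<forall>x\<in>M. \<exists>U V (\<phi>::'a \<Rightarrow> 'a) (\<psi>::'a \<Rightarrow> 'a) L.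
        open U \<and> x \<in> U \<and> open V \<and> subspace L \<and>
        smooth_on U \<phi> \<and> smooth_on V \<psi> \<and> \<phi> ` U = V \<and>
        (\<forall>y\<in>U. \<psi> (\<phi> y) = y) \<and> (\<forall>z\<in>V. \<phi> (\<psi> z) = z) \<and>
        \<phi> ` (M \<inter> U) = V \<inter> L)"

definition nearest_point_projection ::
  "(real^'d) set \<Rightarrow> (real^'d) set \<Rightarrow> (real^'d \<Rightarrow> real^'d) \<Rightarrow> bool" where
  "nearest_point_projection M A Pr \<longleftrightarrow>
     open A \<and> M \<subseteq> A \<and> smooth_on A Pr \<and>
     (\<forall>x\<in>A. Pr x \<in> M \<and> (\<forall>y\<in>M. dist x (Pr x) \<le> dist x y) \<and>
             (\<forall>y\<in>M. dist x y = dist x (Pr x) \<longrightarrow> y = Pr x))"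

text \<open>Partial derivatives: d1 f b x = \<partial>_b f(x), d2 f a b x = \<partial>_a \<partial>_b f(x) (vectors; take component c).\<close>
definition d1 :: "(real^'d \<Rightarrow> real^'d) \<Rightarrow> 'd \<Rightarrow> real^'d \<Rightarrow> real^'d" where
  "d1 f b x = frechet_derivative f (at x) (axis b 1)"

definition d2 :: "(real^'d \<Rightarrow> real^'d) \<Rightarrow> 'd \<Rightarrow> 'd \<Rightarrow> real^'d \<Rightarrow> real^'d" where
  "d2 f a b x = d1 (\<lambda>y. d1 f b y) a x"

definition control :: "real \<Rightarrow> (real \<Rightarrow> real \<Rightarrow> real) \<Rightarrow> bool" where
  "control T \<omega> \<longleftrightarrow>
     continuous_on {(s,t). 0 \<le> s \<and> s \<le> t \<and> t \<le> T} (\<lambda>(s,t). \<omega> s t) \<and>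
     (\<forall>s t. 0 \<le> s \<and> s \<le> t \<and> t \<le> T \<longrightarrow> 0 \<le> \<omega> s t) \<and>
     (\<forall>t. 0 \<le> t \<and> t \<le> T \<longrightarrow> \<omega> t t = 0) \<and>
     (\<forall>s u t. 0 \<le> s \<and> s \<le> u \<and> u \<le> t \<and> t \<le> T \<longrightarrow> \<omega> s u + \<omega> u t \<le> \<omega> s t)"

text \<open>A rough path given by its (two-parameter) first order increments Z and second order part ZZ,
  with ZZ s t $ a $ b = ZZ^{ab}_{st}.\<close>
definition rough_incr ::
  "real \<Rightarrow> (real \<Rightarrow> real \<Rightarrow> real) \<Rightarrow> real \<Rightarrow> (real \<Rightarrow> real \<Rightarrow> real^'n)
     \<Rightarrow> (real \<Rightarrow> real \<Rightarrow> real^'n^'n) \<Rightarrow> bool" where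
  "rough_incr p \<omega> T Z ZZ \<longleftrightarrow>
     (\<exists>C. \<forall>s t. 0 \<le> s \<and> s \<le> t \<and> t \<le> T \<longrightarrow>
          norm (Z s t) \<le> C * \<omega> s t powr (1/p) \<and> norm (ZZ s t) \<le> C * \<omega> s t powr (2/p)) \<and>
     (\<forall>s u t. 0 \<le> s \<and> s \<le> u \<and> u \<le> t \<and> t \<le> T \<longrightarrow>
          Z s t = Z s u + Z u t \<and>
          ZZ s t = ZZ s u + (\<chi> a b. Z s u $ a * Z u t $ b) + ZZ u t)"

definition incr :: "(real \<Rightarrow> real^'n) \<Rightarrow> real \<Rightarrow> real \<Rightarrow> real^'n" where
  "incr X s t = X t - X s"

definition rough_path ::
  "real \<Rightarrow> (real \<Rightarrow> real \<Rightarrow> real) \<Rightarrow> real \<Rightarrow> (real \<Rightarrow> real^'n) \<Rightarrow> (real \<Rightarrow> real \<Rightarrow> real^'n^'n) \<Rightarrow> bool" where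
  "rough_path p \<omega> T X XX \<longleftrightarrow> rough_incr p \<omega> T (incr X) XX"

definition lift_of ::
  "real \<Rightarrow> (real \<Rightarrow> real \<Rightarrow> real) \<Rightarrow> real \<Rightarrow> (real \<Rightarrow> real \<Rightarrow> real^'n)
     \<Rightarrow> (real \<Rightarrow> real \<Rightarrow> real^'n^'n) \<Rightarrow> (real \<Rightarrow> real \<Rightarrow> real^'n^'n) \<Rightarrow> bool" where
  "lift_of p \<omega> T Z ZZ A \<longleftrightarrow>
     rough_incr p \<omega> T Z ZZ \<and>
     (\<forall>\<epsilon>>0. \<exists>\<delta>>0. \<forall>s t. 0 \<le> s \<and> s \<le> t \<and> t \<le> T \<and> \<omega> s t < \<delta> \<longrightarrow>
          norm (ZZ s t - A s t) \<le> \<epsilon> * \<omega> s t)"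

definition push_approx ::
  "(real^'d \<Rightarrow> real^'d) \<Rightarrow> (real \<Rightarrow> real^'d) \<Rightarrow> (real \<Rightarrow> real \<Rightarrow> real^'d^'d) \<Rightarrow> real \<Rightarrow> real \<Rightarrow> real^'d^'d" where
  "push_approx Pr X XX s t =
     (\<chi> c d. \<Sum>a\<in>UNIV. \<Sum>b\<in>UNIV. d1 Pr a (X s) $ c * d1 Pr b (X s) $ d * XX s t $ a $ b)"

definition is_pushforward ::
  "real \<Rightarrow> (real \<Rightarrow> real \<Rightarrow> real) \<Rightarrow> real \<Rightarrow> (real^'d \<Rightarrow> real^'d) \<Rightarrow> (real \<Rightarrow> real^'d)
     \<Rightarrow> (real \<Rightarrow> real \<Rightarrow> real^'d^'d) \<Rightarrow> (real \<Rightarrow> real \<Rightarrow> real^'d) \<Rightarrow> (real \<Rightarrow> real \<Rightarrow> real^'d^'d) \<Rightarrow> bool" where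
  "is_pushforward p \<omega> T Pr X XX Z ZZ \<longleftrightarrow>
     (\<forall>s t. 0 \<le> s \<and> s \<le> t \<and> t \<le> T \<longrightarrow> Z s t = Pr (X t) - Pr (X s)) \<and>
     lift_of p \<omega> T Z ZZ (push_approx Pr X XX)"

definition manifold_rough_path ::
  "real \<Rightarrow> (real \<Rightarrow> real \<Rightarrow> real) \<Rightarrow> real \<Rightarrow> (real^'d) set \<Rightarrow> (real^'d \<Rightarrow> real^'d)
     \<Rightarrow> (real \<Rightarrow> real^'d) \<Rightarrow> (real \<Rightarrow> real \<Rightarrow> real^'d^'d) \<Rightarrow> bool" where
  "manifold_rough_path p \<omega> T M Pr X XX \<longleftrightarrow>
     rough_path p \<omega> T X XX \<and> (\<forall>t. 0 \<le> t \<and> t \<le> T \<longrightarrow> X t \<in> M) \<and>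
     is_pushforward p \<omega> T Pr X XX (incr X) XX"

text \<open>Matrix-valued controlled path (H,H'), H t $ i $ b = H^i_{b;t}, H' t $ a $ i $ b = H'^i_{ab;t}
  (differentiation index a first).\<close>
definition controlled ::
  "real \<Rightarrow> (real \<Rightarrow> real \<Rightarrow> real) \<Rightarrow> real \<Rightarrow> (real \<Rightarrow> real^'d)
     \<Rightarrow> (real \<Rightarrow> real^'d^'e) \<Rightarrow> (real \<Rightarrow> real^'d^'e^'d) \<Rightarrow> bool" where
  "controlled p \<omega> T X H H' \<longleftrightarrow>
     (\<exists>C. \<forall>s t. 0 \<le> s \<and> s \<le> t \<and> t \<le> T \<longrightarrow>
        norm (H t - H s - (\<chi> i b. \<Sum>a\<in>UNIV. H' s $ a $ i $ b * (X t $ a - X s $ a)))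
            \<le> C * \<omega> s t powr (2/p) \<and>
        norm (H' t - H' s) \<le> C * \<omega> s t powr (1/p))"

definition is_partition :: "real \<Rightarrow> real \<Rightarrow> real list \<Rightarrow> bool" where
  "is_partition s t us \<longleftrightarrow> us \<noteq> [] \<and> hd us = s \<and> last us = t \<and> sorted_wrt (<) us"

definition mesh :: "real list \<Rightarrow> real" where
  "mesh us = (if length us < 2 then 0 else Max (set (map (\<lambda>(u,v). v - u) (zip us (tl us)))))"

definition psum :: "(real \<Rightarrow> real \<Rightarrow> 'a::comm_monoid_add) \<Rightarrow> real list \<Rightarrow> 'a" where
  "psum F us = sum_list (map (\<lambda>(u,v). F u v) (zip us (tl us)))"

definition partition_limit :: "(real \<Rightarrow> real \<Rightarrow> 'a::real_normed_vector) \<Rightarrow> real \<Rightarrow> real \<Rightarrow> 'a \<Rightarrow> bool" where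
  "partition_limit F s t I \<longleftrightarrow>
     (\<forall>\<epsilon>>0. \<exists>\<delta>>0. \<forall>us. is_partition s t us \<and> mesh us < \<delta> \<longrightarrow> norm (psum F us - I) < \<epsilon>)"

definition comp_term ::
  "(real \<Rightarrow> real^'d) \<Rightarrow> (real \<Rightarrow> real \<Rightarrow> real^'d^'d) \<Rightarrow> (real \<Rightarrow> real^'d^'e) \<Rightarrow> (real \<Rightarrow> real^'d^'e^'d)
     \<Rightarrow> real \<Rightarrow> real \<Rightarrow> real^'e" where
  "comp_term X XX H H' u v =
     (\<chi> i. (\<Sum>c\<in>UNIV. H u $ i $ c * (X v $ c - X u $ c)) +
           (\<Sum>a\<in>UNIV. \<Sum>b\<in>UNIV. H' u $ a $ i $ b * XX u v $ a $ b))"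

definition int_approx ::
  "(real \<Rightarrow> real \<Rightarrow> real^'d^'d) \<Rightarrow> (real \<Rightarrow> real^'d^'e) \<Rightarrow> real \<Rightarrow> real \<Rightarrow> real^'e^'e" where
  "int_approx XX H s t = (\<chi> i j. \<Sum>a\<in>UNIV. \<Sum>b\<in>UNIV. H s $ i $ a * H s $ j $ b * XX s t $ a $ b)"

definition is_rough_integral ::
  "real \<Rightarrow> (real \<Rightarrow> real \<Rightarrow> real) \<Rightarrow> real \<Rightarrow> (real \<Rightarrow> real^'d) \<Rightarrow> (real \<Rightarrow> real \<Rightarrow> real^'d^'d)
     \<Rightarrow> (real \<Rightarrow> real^'d^'e) \<Rightarrow> (real \<Rightarrow> real^'d^'e^'d)
     \<Rightarrow> (real \<Rightarrow> real \<Rightarrow> real^'e) \<Rightarrow> (real \<Rightarrow> real \<Rightarrow> real^'e^'e) \<Rightarrow> bool" where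
  "is_rough_integral p \<omega> T X XX H H' Z ZZ \<longleftrightarrow>
     (\<forall>s t. 0 \<le> s \<and> s \<le> t \<and> t \<le> T \<longrightarrow> partition_limit (comp_term X XX H H') s t (Z s t)) \<and>
     lift_of p \<omega> T Z ZZ (int_approx XX H)"

definition pull_trace ::
  "(real^'d \<Rightarrow> real^'d) \<Rightarrow> (real \<Rightarrow> real^'d) \<Rightarrow> (real \<Rightarrow> real^'d^'e) \<Rightarrow> real \<Rightarrow> real^'d^'e" where
  "pull_trace Pr X H t = (\<chi> r b. \<Sum>c\<in>UNIV. H t $ r $ c * d1 Pr b (X t) $ c)"

definition pull_deriv ::
  "(real^'d \<Rightarrow> real^'d) \<Rightarrow> (real \<Rightarrow> real^'d) \<Rightarrow> (real \<Rightarrow> real^'d^'e) \<Rightarrow> (real \<Rightarrow> real^'d^'e^'d)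
     \<Rightarrow> real \<Rightarrow> real^'d^'e^'d" where
  "pull_deriv Pr X H H' t =
     (\<chi> a r b. (\<Sum>i\<in>UNIV. \<Sum>j\<in>UNIV. H' t $ i $ r $ j * d1 Pr a (X t) $ i * d1 Pr b (X t) $ j) +
              (\<Sum>c\<in>UNIV. H t $ r $ c * d2 Pr a b (X t) $ c))"

definition is_constrained_integral ::
  "real \<Rightarrow> (real \<Rightarrow> real \<Rightarrow> real) \<Rightarrow> real \<Rightarrow> (real^'d \<Rightarrow> real^'d) \<Rightarrow> (real \<Rightarrow> real^'d)
     \<Rightarrow> (real \<Rightarrow> real \<Rightarrow> real^'d^'d) \<Rightarrow> (real \<Rightarrow> real^'d^'e) \<Rightarrow> (real \<Rightarrow> real^'d^'e^'d)
     \<Rightarrow> (real \<Rightarrow> real \<Rightarrow> real^'e) \<Rightarrow> (real \<Rightarrow> real \<Rightarrow> real^'e^'e) \<Rightarrow> bool" where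
  "is_constrained_integral p \<omega> T Pr X XX H H' Z ZZ \<longleftrightarrow>
     is_rough_integral p \<omega> T X XX (pull_trace Pr X H) (pull_deriv Pr X H H') Z ZZ"

definition Qm :: "(real^'d \<Rightarrow> real^'d) \<Rightarrow> real^'d \<Rightarrow> 'd \<Rightarrow> 'd \<Rightarrow> real" where
  "Qm Pr x c b = (if c = b then 1 else 0) - d1 Pr b x $ c"

definition dQm :: "(real^'d \<Rightarrow> real^'d) \<Rightarrow> real^'d \<Rightarrow> 'd \<Rightarrow> 'd \<Rightarrow> 'd \<Rightarrow> real" where
  "dQm Pr x a c b = - (d2 Pr a b x $ c)"

text \<open>Leibniz product H \<cdot> Q(X) = (H_c Q^c_b(X), H'_{ac} Q^c_b(X) + H_c \<partial>_a Q^c_b(X)).\<close>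
definition HQ_trace ::
  "(real^'d \<Rightarrow> real^'d) \<Rightarrow> (real \<Rightarrow> real^'d) \<Rightarrow> (real \<Rightarrow> real^'d^'e) \<Rightarrow> real \<Rightarrow> real^'d^'e" where
  "HQ_trace Pr X H t = (\<chi> r b. \<Sum>c\<in>UNIV. H t $ r $ c * Qm Pr (X t) c b)"

definition HQ_deriv ::
  "(real^'d \<Rightarrow> real^'d) \<Rightarrow> (real \<Rightarrow> real^'d) \<Rightarrow> (real \<Rightarrow> real^'d^'e) \<Rightarrow> (real \<Rightarrow> real^'d^'e^'d)
     \<Rightarrow> real \<Rightarrow> real^'d^'e^'d" where
  "HQ_deriv Pr X H H' t =
     (\<chi> a r b. \<Sum>c\<in>UNIV. H' t $ a $ r $ c * Qm Pr (X t) c b + H t $ r $ c * dQm Pr (X t) a c b)"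

definition fixed_by_Q ::
  "real \<Rightarrow> (real^'d \<Rightarrow> real^'d) \<Rightarrow> (real \<Rightarrow> real^'d) \<Rightarrow> (real \<Rightarrow> real^'d^'e) \<Rightarrow> (real \<Rightarrow> real^'d^'e^'d) \<Rightarrow> bool" where
  "fixed_by_Q T Pr X H H' \<longleftrightarrow>
     (\<forall>t. 0 \<le> t \<and> t \<le> T \<longrightarrow> H t = HQ_trace Pr X H t \<and> H' t = HQ_deriv Pr X H H' t)"

end

theory Submission
  imports Defs
begin



lemma npp_fix: assumes "nearest_point_projection M A Pr" "y \<in> M" shows "Pr y = y"
proof -
  from assms have yA: "y \<in> A" and h: "\<forall>x\<in>A. Pr x \<in> M \<and> (\<forall>z\<in>M. dist x (Pr x) \<le> dist x z) \<and> (\<forall>z\<in>M. dist x z = dist x (Pr x) \<longrightarrow> z = Pr x)"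
    unfolding nearest_point_projection_def by auto
  then have "dist y (Pr y) \<le> dist y y" using assms(2) by blast
  then have "dist y y = dist y (Pr y)" by simp
  then show ?thesis using h yA assms(2) by metis
qed

lemma npp_PrPr: assumes "nearest_point_projection M A Pr" "x \<in> A" shows "Pr (Pr x) = Pr x" "Pr x \<in> A"
proof -
  have "Pr x \<in> M" using assms unfolding nearest_point_projection_def by auto
  then show "Pr (Pr x) = Pr x" using npp_fix[OF assms(1)] by blast
  show "Pr x \<in> A" using \<open>Pr x \<in> M\<close> assms unfolding nearest_point_projection_def by auto
qed

lemma npp_diff: assumes "nearest_point_projection M A Pr" "x \<in> A"
  shows "Pr differentiable (at x)" "(\<lambda>z. frechet_derivative Pr (at z) v) differentiable (at x)"
proof -
  have "Ck_on (Suc (Suc 0)) A Pr" using assms unfolding nearest_point_projection_def smooth_on_def by blast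
  then show "Pr differentiable (at x)" "(\<lambda>z. frechet_derivative Pr (at z) v) differentiable (at x)"
    using assms(2) by auto
qed

lemma npp_L1: assumes npp: "nearest_point_projection M A Pr" and x: "x \<in> A"
  shows "frechet_derivative Pr (at (Pr x)) \<circ> frechet_derivative Pr (at x) = frechet_derivative Pr (at x)"
proof -
  have oA: "open A" using npp unfolding nearest_point_projection_def by auto
  have d1: "(Pr has_derivative frechet_derivative Pr (at x)) (at x)"
    using npp_diff[OF npp x] frechet_derivative_works by blast
  have d2: "(Pr has_derivative frechet_derivative Pr (at (Pr x))) (at (Pr x))"
    using npp_diff[OF npp npp_PrPr(2)[OF npp x]] frechet_derivative_works by blast
  have "((Pr \<circ> Pr) has_derivative (frechet_derivative Pr (at (Pr x)) \<circ> frechet_derivative Pr (at x))) (at x)"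
    by (rule diff_chain_at[OF d1 d2])
  then have "(Pr has_derivative (frechet_derivative Pr (at (Pr x)) \<circ> frechet_derivative Pr (at x))) (at x)"
    by (rule has_derivative_transform_within_open[OF _ oA x]) (simp add: npp_PrPr[OF npp])
  then show ?thesis using d1 has_derivative_unique by blast
qed




lemma lin_expand: assumes "linear f" shows "f w = (\<Sum>j\<in>UNIV. (w $ j) *\<^sub>R f (axis j (1::real)))"
proof -
  have "f w = f (\<Sum>j\<in>UNIV. (w $ j) *\<^sub>R axis j 1)"
    using basis_expansion[of w] by (simp add: scalar_mult_eq_scaleR)
  also have "\<dots> = (\<Sum>j\<in>UNIV. (w $ j) *\<^sub>R f (axis j 1))"
    by (simp add: linear_sum[OF assms] linear_scale[OF assms])
  finally show ?thesis .
qed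

lemma npp_L2: assumes npp: "nearest_point_projection M A Pr" and yM: "y \<in> M"
  shows "d2 Pr a b y = (\<Sum>j\<in>UNIV. (d2 Pr a b y $ j) *\<^sub>R d1 Pr j y) +
          (\<Sum>j\<in>UNIV. (d1 Pr b y $ j) *\<^sub>R (\<Sum>i\<in>UNIV. (d1 Pr a y $ i) *\<^sub>R d2 Pr i j y))"
proof -
  define DP where "DP z = frechet_derivative Pr (at z)" for z
  define u where "u = (\<lambda>x. DP x (axis b 1))"
  define G where "G j = (\<lambda>z. DP z (axis j 1))" for j
  define Du where "Du = frechet_derivative u (at y)"
  define DG where "DG j = frechet_derivative (G j) (at y)" for j
  have oA: "open A" using npp unfolding nearest_point_projection_def by auto
  have yA: "y \<in> A" using npp yM unfolding nearest_point_projection_def by auto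
  have Pry: "Pr y = y" using npp_fix[OF npp yM] .
  have dP: "(Pr has_derivative DP y) (at y)"
    using npp_diff[OF npp yA] frechet_derivative_works unfolding DP_def by blast
  have dG: "(G j has_derivative DG j) (at y)" for j
    using npp_diff(2)[OF npp yA, of "axis j 1"] frechet_derivative_works unfolding DG_def G_def DP_def by blast
  have du: "(u has_derivative Du) (at y)"
    using npp_diff(2)[OF npp yA, of "axis b 1"] frechet_derivative_works unfolding Du_def u_def DP_def by blast
  have linDP: "linear (DP z)" if "z \<in> A" for z
    using npp_diff[OF npp that] frechet_derivative_works has_derivative_linear unfolding DP_def by blast
  have linDG: "linear (DG j)" for j using dG has_derivative_linear by blast
  have eqA: "u x = (\<Sum>j\<in>UNIV. (u x $ j) *\<^sub>R G j (Pr x))" if "x \<in> A" for x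
  proof -
    have "u x = DP (Pr x) (u x)"
      using fun_cong[OF npp_L1[OF npp that], of "axis b 1"] unfolding u_def DP_def by simp
    also have "\<dots> = (\<Sum>j\<in>UNIV. (u x $ j) *\<^sub>R G j (Pr x))"
      unfolding G_def by (rule lin_expand[OF linDP[OF npp_PrPr(2)[OF npp that]]])
    finally show ?thesis .
  qed
  have dGP: "((\<lambda>x. G j (Pr x)) has_derivative (\<lambda>h. DG j (DP y h))) (at y)" for j
    using diff_chain_at[OF dP, of "G j" "DG j"] dG Pry by (simp add: o_def)
  have duj: "((\<lambda>x. u x $ j) has_derivative (\<lambda>h. Du h $ j)) (at y)" for j
    by (rule bounded_linear.has_derivative[OF bounded_linear_vec_nth du])
  have "((\<lambda>x. \<Sum>j\<in>UNIV. (u x $ j) *\<^sub>R G j (Pr x)) has_derivative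
        (\<lambda>h. \<Sum>j\<in>UNIV. (u y $ j) *\<^sub>R DG j (DP y h) + (Du h $ j) *\<^sub>R G j (Pr y))) (at y)"
    by (rule has_derivative_sum, rule has_derivative_scaleR[OF duj dGP])
  then have "(u has_derivative
        (\<lambda>h. \<Sum>j\<in>UNIV. (u y $ j) *\<^sub>R DG j (DP y h) + (Du h $ j) *\<^sub>R G j (Pr y))) (at y)"
    by (rule has_derivative_transform_within_open[OF _ oA yA]) (simp add: eqA)
  then have DuEq: "Du = (\<lambda>h. \<Sum>j\<in>UNIV. (u y $ j) *\<^sub>R DG j (DP y h) + (Du h $ j) *\<^sub>R G j (Pr y))"
    using du has_derivative_unique by blast
  have e1: "d2 Pr a b y = Du (axis a 1)" unfolding d2_def d1_def Du_def u_def DP_def by simp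
  have e2: "d1 Pr j y = G j y" for j unfolding d1_def G_def DP_def by simp
  have e3: "d1 Pr b y = u y" unfolding d1_def u_def DP_def by simp
  have e4: "d2 Pr i j y = DG j (axis i 1)" for i j unfolding d2_def d1_def DG_def G_def DP_def by simp
  have e5: "DG j (DP y (axis a 1)) = (\<Sum>i\<in>UNIV. (d1 Pr a y $ i) *\<^sub>R d2 Pr i j y)" for j
    unfolding e4 d1_def DP_def[symmetric] by (rule lin_expand[OF linDG])
  have "Du (axis a 1) = (\<Sum>j\<in>UNIV. (u y $ j) *\<^sub>R DG j (DP y (axis a 1)) + (Du (axis a 1) $ j) *\<^sub>R G j (Pr y))"
    by (rule fun_cong[OF DuEq])
  also have "\<dots> = (\<Sum>j\<in>UNIV. (d2 Pr a b y $ j) *\<^sub>R d1 Pr j y) +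
          (\<Sum>j\<in>UNIV. (d1 Pr b y $ j) *\<^sub>R (\<Sum>i\<in>UNIV. (d1 Pr a y $ i) *\<^sub>R d2 Pr i j y))"
    unfolding Pry e5 by (simp add: sum.distrib e1[symmetric] e2[symmetric] e3[symmetric] add.commute)
  finally show ?thesis using e1 by simp
qed




lemma sum3_rev:
  fixes f :: "'a::finite \<Rightarrow> 'b::finite \<Rightarrow> 'c::finite \<Rightarrow> real"
  shows "(\<Sum>x\<in>UNIV. \<Sum>y\<in>UNIV. \<Sum>z\<in>UNIV. f x y z) = (\<Sum>z\<in>UNIV. \<Sum>y\<in>UNIV. \<Sum>x\<in>UNIV. f x y z)"
proof -
  have "(\<Sum>x\<in>UNIV. \<Sum>y\<in>UNIV. \<Sum>z\<in>UNIV. f x y z) = (\<Sum>x\<in>UNIV. \<Sum>z\<in>UNIV. \<Sum>y\<in>UNIV. f x y z)"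
    by (rule sum.cong[OF refl], rule sum.swap)
  also have "\<dots> = (\<Sum>z\<in>UNIV. \<Sum>x\<in>UNIV. \<Sum>y\<in>UNIV. f x y z)" by (rule sum.swap)
  also have "\<dots> = (\<Sum>z\<in>UNIV. \<Sum>y\<in>UNIV. \<Sum>x\<in>UNIV. f x y z)"
    by (rule sum.cong[OF refl], rule sum.swap)
  finally show ?thesis .
qed

lemma alg:
  fixes h :: "'d::finite \<Rightarrow> real" and h' P :: "'d \<Rightarrow> 'd \<Rightarrow> real" and D :: "'d \<Rightarrow> 'd \<Rightarrow> 'd \<Rightarrow> real"
  assumes A: "\<And>b. (\<Sum>c\<in>UNIV. h c * P c b) = 0"
    and B: "\<And>i b. (\<Sum>c\<in>UNIV. h' i c * P c b) = - (\<Sum>c\<in>UNIV. h c * D i b c)"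
    and L1: "\<And>c b. (\<Sum>j\<in>UNIV. P c j * P j b) = P c b"
    and L2: "\<And>a b c. D a b c = (\<Sum>j\<in>UNIV. D a b j * P c j) + (\<Sum>j\<in>UNIV. P j b * (\<Sum>i\<in>UNIV. P i a * D i j c))"
  shows "(\<Sum>i\<in>UNIV. \<Sum>j\<in>UNIV. h' i j * P i a * P j b) + (\<Sum>c\<in>UNIV. h c * D a b c) = 0"
proof -
  have T1: "(\<Sum>c\<in>UNIV. h c * (\<Sum>j\<in>UNIV. D a b j * P c j)) = 0"
  proof -
    have "(\<Sum>c\<in>UNIV. h c * (\<Sum>j\<in>UNIV. D a b j * P c j)) = (\<Sum>j\<in>UNIV. D a b j * (\<Sum>c\<in>UNIV. h c * P c j))"
      unfolding sum_distrib_left by (subst sum.swap) (simp add: mult_ac)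
    also have "\<dots> = 0" by (simp add: A)
    finally show ?thesis .
  qed
  have T2: "(\<Sum>c\<in>UNIV. h c * (\<Sum>j\<in>UNIV. P j b * (\<Sum>i\<in>UNIV. P i a * D i j c)))
      = (\<Sum>i\<in>UNIV. P i a * (\<Sum>j\<in>UNIV. P j b * (\<Sum>c\<in>UNIV. h c * D i j c)))"
    unfolding sum_distrib_left by (subst sum3_rev) (simp add: mult_ac)
  also have "\<dots> = - (\<Sum>i\<in>UNIV. P i a * (\<Sum>j\<in>UNIV. P j b * (\<Sum>c\<in>UNIV. h' i c * P c j)))"
    by (simp add: B sum_negf)
  also have "\<dots> = - (\<Sum>i\<in>UNIV. P i a * (\<Sum>c\<in>UNIV. h' i c * (\<Sum>j\<in>UNIV. P c j * P j b)))"
    unfolding sum_distrib_left by (subst sum.swap) (simp add: mult_ac)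
  also have "\<dots> = - (\<Sum>i\<in>UNIV. P i a * (\<Sum>c\<in>UNIV. h' i c * P c b))"
    by (simp add: L1)
  finally have T2': "(\<Sum>c\<in>UNIV. h c * (\<Sum>j\<in>UNIV. P j b * (\<Sum>i\<in>UNIV. P i a * D i j c)))
      = - (\<Sum>i\<in>UNIV. P i a * (\<Sum>c\<in>UNIV. h' i c * P c b))" .
  have S: "(\<Sum>c\<in>UNIV. h c * D a b c) = (\<Sum>c\<in>UNIV. h c * (\<Sum>j\<in>UNIV. D a b j * P c j))
      + (\<Sum>c\<in>UNIV. h c * (\<Sum>j\<in>UNIV. P j b * (\<Sum>i\<in>UNIV. P i a * D i j c)))"
    by (subst L2) (simp add: distrib_left sum.distrib)
  have F: "(\<Sum>i\<in>UNIV. \<Sum>j\<in>UNIV. h' i j * P i a * P j b) = (\<Sum>i\<in>UNIV. P i a * (\<Sum>c\<in>UNIV. h' i c * P c b))"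
    by (simp add: sum_distrib_left mult_ac)
  show ?thesis unfolding S T1 T2' F by simp
qed




lemma npp_L1c: assumes npp: "nearest_point_projection M A Pr" and yM: "y \<in> M"
  shows "(\<Sum>j\<in>UNIV. d1 Pr j y $ c * d1 Pr b y $ j) = d1 Pr b y $ c"
proof -
  have yA: "y \<in> A" using npp yM unfolding nearest_point_projection_def by auto
  have Pry: "Pr y = y" using npp_fix[OF npp yM] .
  have lin: "linear (frechet_derivative Pr (at y))"
    using npp_diff[OF npp yA] frechet_derivative_works has_derivative_linear by blast
  have "frechet_derivative Pr (at y) (frechet_derivative Pr (at y) (axis b 1)) = frechet_derivative Pr (at y) (axis b 1)"
    using fun_cong[OF npp_L1[OF npp yA], of "axis b 1"] Pry by simp
  then have "(\<Sum>j\<in>UNIV. (d1 Pr b y $ j) *\<^sub>R d1 Pr j y) = d1 Pr b y"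
    unfolding d1_def by (subst (asm) lin_expand[OF lin]) 
  then have "(\<Sum>j\<in>UNIV. (d1 Pr b y $ j) *\<^sub>R d1 Pr j y) $ c = d1 Pr b y $ c" by simp
  then show ?thesis by (simp add: mult.commute)
qed

lemma delta_sum: fixes h p :: "'d::finite \<Rightarrow> real"
  shows "(\<Sum>c\<in>UNIV. h c * ((if c = b then 1 else 0) - p c)) = h b - (\<Sum>c\<in>UNIV. h c * p c)"
proof -
  have "(\<Sum>c\<in>UNIV. h c * ((if c = b then 1 else 0) - p c)) = (\<Sum>c\<in>UNIV. (if c = b then h c else 0) - h c * p c)"
    by (rule sum.cong) (auto simp: right_diff_distrib)
  also have "\<dots> = h b - (\<Sum>c\<in>UNIV. h c * p c)" by (simp add: sum_subtractf)
  finally show ?thesis .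
qed

lemma pull_zero:
  assumes npp: "nearest_point_projection M A Pr" and yM: "X t \<in> M"
    and fx: "H t = HQ_trace Pr X H t" "H' t = HQ_deriv Pr X H H' t"
  shows "pull_trace Pr X H t = 0" "pull_deriv Pr X H H' t = 0"
proof -
  define y where "y = X t"
  have A: "(\<Sum>c\<in>UNIV. H t $ r $ c * d1 Pr b y $ c) = 0" for r b
  proof -
    have "H t $ r $ b = (\<Sum>c\<in>UNIV. H t $ r $ c * Qm Pr y c b)"
      using arg_cong[OF fx(1), of "\<lambda>m. m $ r $ b"] unfolding HQ_trace_def y_def by simp
    also have "\<dots> = H t $ r $ b - (\<Sum>c\<in>UNIV. H t $ r $ c * d1 Pr b y $ c)"
      unfolding Qm_def by (rule delta_sum)
    finally show ?thesis by simp
  qed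
  have B: "(\<Sum>c\<in>UNIV. H' t $ i $ r $ c * d1 Pr b y $ c) = - (\<Sum>c\<in>UNIV. H t $ r $ c * d2 Pr i b y $ c)" for i r b
  proof -
    have "H' t $ i $ r $ b = (\<Sum>c\<in>UNIV. H' t $ i $ r $ c * Qm Pr y c b + H t $ r $ c * dQm Pr y i c b)"
      using arg_cong[OF fx(2), of "\<lambda>m. m $ i $ r $ b"] unfolding HQ_deriv_def y_def by simp
    also have "\<dots> = H' t $ i $ r $ b - (\<Sum>c\<in>UNIV. H' t $ i $ r $ c * d1 Pr b y $ c) - (\<Sum>c\<in>UNIV. H t $ r $ c * d2 Pr i b y $ c)"
      unfolding Qm_def dQm_def sum.distrib delta_sum by (simp add: sum_negf)
    finally show ?thesis by simp
  qed
  show "pull_trace Pr X H t = 0"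
    unfolding pull_trace_def using A unfolding y_def by (simp add: vec_eq_iff mult.commute)
  have "(\<Sum>i\<in>UNIV. \<Sum>j\<in>UNIV. H' t $ i $ r $ j * d1 Pr a y $ i * d1 Pr b y $ j) + (\<Sum>c\<in>UNIV. H t $ r $ c * d2 Pr a b y $ c) = 0" for a r b
  proof (rule alg[where h = "\<lambda>c. H t $ r $ c" and h' = "\<lambda>i c. H' t $ i $ r $ c" and P = "\<lambda>c b. d1 Pr b y $ c" and D = "\<lambda>a b c. d2 Pr a b y $ c"])
    show "\<And>b. (\<Sum>c\<in>UNIV. H t $ r $ c * d1 Pr b y $ c) = 0" using A .
    show "\<And>i b. (\<Sum>c\<in>UNIV. H' t $ i $ r $ c * d1 Pr b y $ c) = - (\<Sum>c\<in>UNIV. H t $ r $ c * d2 Pr i b y $ c)" using B .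
    show "\<And>c b. (\<Sum>j\<in>UNIV. d1 Pr j y $ c * d1 Pr b y $ j) = d1 Pr b y $ c"
      using npp_L1c[OF npp yM] unfolding y_def .
    show "\<And>a b c. d2 Pr a b y $ c = (\<Sum>j\<in>UNIV. d2 Pr a b y $ j * d1 Pr j y $ c) + (\<Sum>j\<in>UNIV. d1 Pr b y $ j * (\<Sum>i\<in>UNIV. d1 Pr a y $ i * d2 Pr i j y $ c))"
    proof -
      fix a b c
      show "d2 Pr a b y $ c = (\<Sum>j\<in>UNIV. d2 Pr a b y $ j * d1 Pr j y $ c) + (\<Sum>j\<in>UNIV. d1 Pr b y $ j * (\<Sum>i\<in>UNIV. d1 Pr a y $ i * d2 Pr i j y $ c))"
        using arg_cong[OF npp_L2[OF npp yM, of a b], of "\<lambda>v. v $ c"] unfolding y_def by simp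
    qed
  qed
  then have "pull_deriv Pr X H H' t $ a $ r $ b = 0" for a r b
    unfolding pull_deriv_def y_def by simp
  then show "pull_deriv Pr X H H' t = 0"
    by (simp add: vec_eq_iff)
qed




lemma sorted_le_last: "sorted_wrt (<) xs \<Longrightarrow> x \<in> set xs \<Longrightarrow> x \<le> last (xs::real list)"
proof (induction xs)
  case Nil then show ?case by simp
next
  case (Cons a xs)
  show ?case
  proof (cases "xs = []")
    case True then show ?thesis using Cons by simp
  next
    case False
    then have "last xs \<in> set xs" by simp
    then show ?thesis using Cons False by (auto intro: less_imp_le)
  qed
qed

lemma part_mem: "is_partition s t us \<Longrightarrow> x \<in> set us \<Longrightarrow> s \<le> x \<and> x \<le> t"
  unfolding is_partition_def
  by (metis dual_order.order_iff_strict list.collapse set_ConsD sorted_le_last sorted_wrt.simps(2))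

lemma mesh_lt: assumes "(0::real) < d"
  shows "mesh us < d \<longleftrightarrow> (\<forall>(u,v)\<in>set (zip us (tl us)). v - u < d)"
proof (cases "length us < 2")
  case True
  then have "tl us = []" by (cases us) auto
  then show ?thesis using True assms unfolding mesh_def by simp
next
  case False
  then have "zip us (tl us) \<noteq> []" by (cases us; cases "tl us") auto
  then show ?thesis using False unfolding mesh_def by (auto simp: Max_less_iff)
qed

lemma fine_partition: assumes "s \<le> t" "(0::real) < d" shows "\<exists>us. is_partition s t us \<and> mesh us < d"
proof -
  have key: "\<forall>s. s \<le> t \<and> t - s \<le> real n * (d/2) \<longrightarrow> (\<exists>us. is_partition s t us \<and> (\<forall>(u,v)\<in>set (zip us (tl us)). v - u < d))" for n
  proof (induction n)
    case 0
    show ?case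
    proof (intro allI impI)
      fix s assume "s \<le> t \<and> t - s \<le> real 0 * (d / 2)"
      then have "s = t" by simp
      then show "\<exists>us. is_partition s t us \<and> (\<forall>(u,v)\<in>set (zip us (tl us)). v - u < d)"
        by (intro exI[of _ "[s]"]) (simp add: is_partition_def)
    qed
  next
    case (Suc n)
    show ?case
    proof (intro allI impI)
      fix s assume s: "s \<le> t \<and> t - s \<le> real (Suc n) * (d / 2)"
      show "\<exists>us. is_partition s t us \<and> (\<forall>(u,v)\<in>set (zip us (tl us)). v - u < d)"
      proof (cases "t - s < d")
        case True
        show ?thesis
        proof (cases "s = t")
          case True then show ?thesis
            by (intro exI[of _ "[s]"]) (simp add: is_partition_def)
        next
          case False
          then show ?thesis using s \<open>t - s < d\<close>
            by (intro exI[of _ "[s,t]"]) (auto simp: is_partition_def)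
        qed
      next
        case False
        define s' where "s' = s + d/2"
        have "s' \<le> t \<and> t - s' \<le> real n * (d/2)" using s False assms(2) unfolding s'_def
          by (auto simp: algebra_simps)
        then obtain us where us: "is_partition s' t us" and m: "\<forall>(u,v)\<in>set (zip us (tl us)). v - u < d"
          using Suc.IH by blast
        have ne: "us \<noteq> []" using us unfolding is_partition_def by auto
        have hd: "hd us = s'" using us unfolding is_partition_def by auto
        have gt: "\<forall>x\<in>set us. s < x" using part_mem[OF us] assms(2) unfolding s'_def by force
        have "is_partition s t (s # us)" using us ne gt unfolding is_partition_def by auto
        moreover have "\<forall>(u,v)\<in>set (zip (s # us) (tl (s # us))). v - u < d"
        proof -
          have "zip (s # us) us = (s, hd us) # zip us (tl us)"
            using ne by (metis list.collapse zip_Cons_Cons)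
          then show ?thesis using m hd assms(2) unfolding s'_def by auto
        qed
        ultimately show ?thesis by blast
      qed
    qed
  qed
  obtain n where "(t - s) / (d/2) \<le> real n" using real_arch_simple by blast
  then have "t - s \<le> real n * (d/2)" using assms(2) by (simp add: field_simps)
  then obtain us where "is_partition s t us" "\<forall>(u,v)\<in>set (zip us (tl us)). v - u < d"
    using key assms(1) by blast
  then show ?thesis using mesh_lt[OF assms(2)] by blast
qed

lemma psum_cong: "(\<And>u v. u \<in> set us \<Longrightarrow> F u v = G u v) \<Longrightarrow> psum F us = psum G us"
  unfolding psum_def by (rule arg_cong[where f = sum_list], rule map_cong) (auto dest: set_zip_leftD)

lemma partition_limit_cong:
  assumes "\<And>u v. s \<le> u \<Longrightarrow> u \<le> t \<Longrightarrow> F u v = G u v"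
  shows "partition_limit F s t I = partition_limit G s t I"
proof -
  have "psum F us = psum G us" if "is_partition s t us" for us
    by (rule psum_cong) (use assms part_mem[OF that] in auto)
  then show ?thesis unfolding partition_limit_def by metis
qed

lemma partition_limit_zero:
  fixes I :: "'a::real_normed_vector"
  assumes "s \<le> t" "\<And>u v. s \<le> u \<Longrightarrow> u \<le> t \<Longrightarrow> F u v = 0"
  shows "partition_limit F s t I \<longleftrightarrow> I = 0"
proof -
  have "partition_limit F s t I = partition_limit (\<lambda>u v. 0) s t I"
    by (rule partition_limit_cong) (use assms in auto)
  also have "psum (\<lambda>u v. (0::'a)) us = 0" for us
    unfolding psum_def by (induction us) (auto simp: case_prod_beta)
  then have "partition_limit (\<lambda>u v. 0) s t I \<longleftrightarrow> (\<forall>\<epsilon>>0. \<exists>\<delta>>0. \<forall>us. is_partition s t us \<and> mesh us < \<delta> \<longrightarrow> norm I < \<epsilon>)"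
    unfolding partition_limit_def by simp
  also have "\<dots> \<longleftrightarrow> I = 0"
  proof
    assume h: "\<forall>\<epsilon>>0. \<exists>\<delta>>0. \<forall>us. is_partition s t us \<and> mesh us < \<delta> \<longrightarrow> norm I < \<epsilon>"
    have "norm I < \<epsilon>" if "\<epsilon> > 0" for \<epsilon>
    proof -
      obtain \<delta> where d: "\<delta> > 0" "\<forall>us. is_partition s t us \<and> mesh us < \<delta> \<longrightarrow> norm I < \<epsilon>" using h \<open>\<epsilon>>0\<close> by blast
      obtain us where "is_partition s t us \<and> mesh us < \<delta>" using fine_partition[OF assms(1) d(1)] by blast
      then show ?thesis using d by blast
    qed
    then show "I = 0" by (metis norm_le_zero_iff not_le order_less_irrefl zero_less_norm_iff)
  qed auto
  finally show ?thesis .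
qed




lemma control_small:
  assumes ctl: "control T \<omega>" and d: "\<delta> > 0"
  shows "\<exists>\<eta>>0. \<forall>s t. 0 \<le> s \<and> s \<le> t \<and> t \<le> T \<and> t - s < \<eta> \<longrightarrow> \<omega> s t < \<delta>"
proof -
  define S where "S = {(s,t). 0 \<le> s \<and> s \<le> t \<and> t \<le> (T::real)}"
  have S': "S = {p. 0 \<le> fst p \<and> fst p \<le> snd p \<and> snd p \<le> T}" unfolding S_def by auto
  have cl: "closed S" unfolding S'
    by (intro closed_Collect_conj closed_Collect_le continuous_intros)
  have bd: "bounded S" unfolding bounded_iff
  proof (intro exI ballI)
    fix x assume "x \<in> S"
    then obtain s t where x: "x = (s,t)" "0 \<le> s" "s \<le> t" "t \<le> T" unfolding S_def by auto
    have "norm x \<le> norm s + norm t" unfolding x by (rule norm_Pair_le)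
    also have "\<dots> \<le> 2 * \<bar>T\<bar>" using x by auto
    finally show "norm x \<le> 2 * \<bar>T\<bar>" .
  qed
  have "continuous_on S (\<lambda>(s,t). \<omega> s t)" using ctl unfolding control_def S_def by auto
  then have uc: "uniformly_continuous_on S (\<lambda>(s,t). \<omega> s t)"
    using compact_uniformly_continuous cl bd compact_eq_bounded_closed by blast
  then obtain \<eta> where e: "\<eta> > 0" "\<forall>x\<in>S. \<forall>x'\<in>S. dist x' x < \<eta> \<longrightarrow> dist ((\<lambda>(s,t). \<omega> s t) x') ((\<lambda>(s,t). \<omega> s t) x) < \<delta>"
    using d unfolding uniformly_continuous_on_def by metis
  show ?thesis
  proof (intro exI[of _ \<eta>] conjI allI impI)
    show "\<eta> > 0" by fact
    fix s t assume st: "0 \<le> s \<and> s \<le> t \<and> t \<le> T \<and> t - s < \<eta>"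
    have m: "(s,s) \<in> S" "(s,t) \<in> S" using st unfolding S_def by auto
    have "dist (s,t) (s,s) = t - s" using st by (simp add: dist_Pair_Pair dist_real_def)
    then have "dist (\<omega> s t) (\<omega> s s) < \<delta>" using e(2) m st by fastforce
    moreover have "\<omega> s s = 0" using ctl st unfolding control_def by auto
    ultimately show "\<omega> s t < \<delta>" by (simp add: dist_real_def)
  qed
qed

lemma additive_small_zero:
  fixes ZZ :: "real \<Rightarrow> real \<Rightarrow> 'a::real_normed_vector"
  assumes ctl: "control T \<omega>"
    and add: "\<And>s u t. 0 \<le> s \<Longrightarrow> s \<le> u \<Longrightarrow> u \<le> t \<Longrightarrow> t \<le> T \<Longrightarrow> ZZ s t = ZZ s u + ZZ u t"
    and sm: "\<forall>\<epsilon>>0. \<exists>\<delta>>0. \<forall>s t. 0 \<le> s \<and> s \<le> t \<and> t \<le> T \<and> \<omega> s t < \<delta> \<longrightarrow> norm (ZZ s t) \<le> \<epsilon> * \<omega> s t"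
    and st: "0 \<le> s" "s \<le> t" "t \<le> T"
  shows "ZZ s t = 0"
proof -
  have bound: "norm (ZZ s t) \<le> \<epsilon> * \<omega> s t" if ep: "\<epsilon> > 0" for \<epsilon>
  proof -
    obtain \<delta> where d: "\<delta> > 0" "\<forall>s t. 0 \<le> s \<and> s \<le> t \<and> t \<le> T \<and> \<omega> s t < \<delta> \<longrightarrow> norm (ZZ s t) \<le> \<epsilon> * \<omega> s t"
      using sm ep by blast
    obtain \<eta> where e: "\<eta> > 0" "\<forall>s t. 0 \<le> s \<and> s \<le> t \<and> t \<le> T \<and> t - s < \<eta> \<longrightarrow> \<omega> s t < \<delta>"
      using control_small[OF ctl d(1)] by blast
    have key: "\<forall>s. 0 \<le> s \<and> s \<le> t \<and> t - s \<le> real n * (\<eta>/2) \<longrightarrow> norm (ZZ s t) \<le> \<epsilon> * \<omega> s t" for n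
    proof (induction n)
      case 0 then show ?case using d e st by auto
    next
      case (Suc n)
      show ?case
      proof (intro allI impI)
        fix s assume s: "0 \<le> s \<and> s \<le> t \<and> t - s \<le> real (Suc n) * (\<eta>/2)"
        show "norm (ZZ s t) \<le> \<epsilon> * \<omega> s t"
        proof (cases "t - s < \<eta>")
          case True then show ?thesis using d e s st by auto
        next
          case False
          define u where "u = s + \<eta>/2"
          have u: "s \<le> u" "u \<le> t" "t - u \<le> real n * (\<eta>/2)" using False s e(1) unfolding u_def
            by (auto simp: algebra_simps)
          have "u - s < \<eta>" using e(1) unfolding u_def by simp
          then have n1: "norm (ZZ s u) \<le> \<epsilon> * \<omega> s u" using d e s u st by auto
          have n2: "norm (ZZ u t) \<le> \<epsilon> * \<omega> u t" using Suc.IH u s by auto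
          have "norm (ZZ s t) \<le> norm (ZZ s u) + norm (ZZ u t)"
            using add[of s u t] s u st by (simp add: norm_triangle_ineq)
          also have "\<dots> \<le> \<epsilon> * (\<omega> s u + \<omega> u t)" using n1 n2 by (simp add: distrib_left)
          also have "\<dots> \<le> \<epsilon> * \<omega> s t"
            using ctl s u st ep unfolding control_def by (intro mult_left_mono) auto
          finally show ?thesis .
        qed
      qed
    qed
    obtain n where "(t - s) / (\<eta>/2) \<le> real n" using real_arch_simple by blast
    then have "t - s \<le> real n * (\<eta>/2)" using e(1) by (simp add: field_simps)
    then show ?thesis using key st by blast
  qed
  have w0: "\<omega> s t \<ge> 0" using ctl st unfolding control_def by auto
  show ?thesis
  proof (rule ccontr)
    assume "ZZ s t \<noteq> 0"
    then have np: "norm (ZZ s t) > 0" by simp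
    then have wp: "\<omega> s t > 0" using bound[of 1] w0 by linarith
    have "norm (ZZ s t) \<le> (norm (ZZ s t) / (2 * \<omega> s t)) * \<omega> s t"
      using bound[of "norm (ZZ s t) / (2 * \<omega> s t)"] np wp by simp
    also have "\<dots> = norm (ZZ s t) / 2" using wp by (simp add: field_simps)
    finally show False using np by simp
  qed
qed




lemma ri_cong:
  assumes h: "\<And>t. 0 \<le> t \<Longrightarrow> t \<le> T \<Longrightarrow> H1 t = H2 t \<and> H1' t = H2' t"
  shows "is_rough_integral p \<omega> T X XX H1 H1' Z ZZ = is_rough_integral p \<omega> T X XX H2 H2' Z ZZ"
proof -
  have pl: "partition_limit (comp_term X XX H1 H1') s t I = partition_limit (comp_term X XX H2 H2') s t I"
    if "0 \<le> s" "s \<le> t" "t \<le> T" for s t I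
    by (rule partition_limit_cong) (use h that in \<open>simp add: comp_term_def\<close>)
  have ia: "int_approx XX H1 s t = int_approx XX H2 s t" if "0 \<le> s" "s \<le> t" "t \<le> T" for s t
    using h[of s] that by (simp add: int_approx_def)
  have la: "lift_of p \<omega> T Z ZZ (int_approx XX H1) = lift_of p \<omega> T Z ZZ (int_approx XX H2)"
    unfolding lift_of_def by (auto simp: ia)
  show ?thesis unfolding is_rough_integral_def la by (auto simp: pl)
qed

lemma ri_zero:
  assumes ctl: "control T \<omega>"
  shows "is_rough_integral p \<omega> T X XX (\<lambda>_. 0) (\<lambda>_. 0) Z ZZ \<longleftrightarrow>
         (\<forall>s t. 0 \<le> s \<and> s \<le> t \<and> t \<le> T \<longrightarrow> Z s t = 0 \<and> ZZ s t = 0)"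
proof -
  have ct: "comp_term X XX (\<lambda>_. 0) (\<lambda>_. 0) u v = 0" for u v by (simp add: comp_term_def vec_eq_iff)
  have ia: "int_approx XX (\<lambda>_. 0) s t = 0" for s t by (simp add: int_approx_def vec_eq_iff)
  show ?thesis
  proof
    assume ri: "is_rough_integral p \<omega> T X XX (\<lambda>_. 0) (\<lambda>_. 0) Z ZZ"
    have Z0: "Z s t = 0" if "0 \<le> s" "s \<le> t" "t \<le> T" for s t
      using ri that partition_limit_zero[of s t "comp_term X XX (\<lambda>_. 0) (\<lambda>_. 0)" "Z s t"] ct
      unfolding is_rough_integral_def by auto
    have ia': "int_approx XX (\<lambda>_. 0) = (\<lambda>s t. 0)" by (intro ext) (simp add: int_approx_def vec_eq_iff)
    have lo: "lift_of p \<omega> T Z ZZ (\<lambda>s t. 0)" using ri unfolding is_rough_integral_def ia' by simp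
    have add: "ZZ s t = ZZ s u + ZZ u t" if "0 \<le> s" "s \<le> u" "u \<le> t" "t \<le> T" for s u t
    proof -
      have "ZZ s t = ZZ s u + (\<chi> a b. Z s u $ a * Z u t $ b) + ZZ u t"
        using lo that unfolding lift_of_def rough_incr_def by blast
      moreover have "Z s u = 0" "Z u t = 0" using Z0 that by auto
      ultimately show ?thesis by (simp add: vec_eq_iff)
    qed
    have sm: "\<forall>\<epsilon>>0. \<exists>\<delta>>0. \<forall>s t. 0 \<le> s \<and> s \<le> t \<and> t \<le> T \<and> \<omega> s t < \<delta> \<longrightarrow> norm (ZZ s t) \<le> \<epsilon> * \<omega> s t"
      using lo unfolding lift_of_def by simp
    show "\<forall>s t. 0 \<le> s \<and> s \<le> t \<and> t \<le> T \<longrightarrow> Z s t = 0 \<and> ZZ s t = 0"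
      using Z0 additive_small_zero[OF ctl add sm] by blast
  next
    assume z: "\<forall>s t. 0 \<le> s \<and> s \<le> t \<and> t \<le> T \<longrightarrow> Z s t = 0 \<and> ZZ s t = 0"
    have pl: "partition_limit (comp_term X XX (\<lambda>_. 0) (\<lambda>_. 0)) s t (Z s t)" if "0 \<le> s" "s \<le> t" "t \<le> T" for s t
      using partition_limit_zero[of s t "comp_term X XX (\<lambda>_. 0) (\<lambda>_. 0)" "Z s t"] ct z that by auto
    have w0: "\<omega> s t \<ge> 0" if "0 \<le> s" "s \<le> t" "t \<le> T" for s t using ctl that unfolding control_def by auto
    have b1: "\<forall>s t. 0 \<le> s \<and> s \<le> t \<and> t \<le> T \<longrightarrow>
          norm (Z s t) \<le> 0 * \<omega> s t powr (1/p) \<and> norm (ZZ s t) \<le> 0 * \<omega> s t powr (2/p)"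
      using z by auto
    have b2: "\<forall>s u t. 0 \<le> s \<and> s \<le> u \<and> u \<le> t \<and> t \<le> T \<longrightarrow>
          Z s t = Z s u + Z u t \<and> ZZ s t = ZZ s u + (\<chi> a b. Z s u $ a * Z u t $ b) + ZZ u t"
    proof (intro allI impI)
      fix s u t assume a: "0 \<le> s \<and> s \<le> u \<and> u \<le> t \<and> t \<le> T"
      then show "Z s t = Z s u + Z u t \<and> ZZ s t = ZZ s u + (\<chi> a b. Z s u $ a * Z u t $ b) + ZZ u t"
        using z[rule_format, of s t] z[rule_format, of s u] z[rule_format, of u t]
        by (auto simp: vec_eq_iff)
    qed
    have ri: "rough_incr p \<omega> T Z ZZ" unfolding rough_incr_def using b1 b2 by blast
    have "lift_of p \<omega> T Z ZZ (int_approx XX (\<lambda>_. 0))"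
      unfolding lift_of_def ia using ri z w0 by auto
    then show "is_rough_integral p \<omega> T X XX (\<lambda>_. 0) (\<lambda>_. 0) Z ZZ"
      unfolding is_rough_integral_def using pl by auto
  qed
qed

theorem mainTheorem10:
  fixes M A :: "(real^'d) set"
    and Pr :: "real^'d \<Rightarrow> real^'d"
    and p T :: real
    and \<omega> :: "real \<Rightarrow> real \<Rightarrow> real"
    and X :: "real \<Rightarrow> real^'d"
    and XX :: "real \<Rightarrow> real \<Rightarrow> real^'d^'d"
  assumes "embedded_submanifold M"
    and "nearest_point_projection M A Pr"
    and "1 \<le> p" and "p < 3"
    and "control T \<omega>"
    and "manifold_rough_path p \<omega> T M Pr X XX"
  shows
    "(\<forall>(H :: real \<Rightarrow> real^'d^'e) H'.
        controlled p \<omega> T X H H' \<and> fixed_by_Q T Pr X H H' \<longrightarrow>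
        (\<forall>Z ZZ. is_constrained_integral p \<omega> T Pr X XX H H' Z ZZ \<longleftrightarrow>
                (\<forall>s t. 0 \<le> s \<and> s \<le> t \<and> t \<le> T \<longrightarrow> Z s t = 0 \<and> ZZ s t = 0))) \<and>
     (\<forall>(H :: real \<Rightarrow> real^'d^'e) H' K K'.
        controlled p \<omega> T X H H' \<and> controlled p \<omega> T X K K' \<and>
        fixed_by_Q T Pr X (\<lambda>t. K t - H t) (\<lambda>t. K' t - H' t) \<longrightarrow>
        (\<forall>Z ZZ. is_constrained_integral p \<omega> T Pr X XX H H' Z ZZ \<longleftrightarrow>
                is_constrained_integral p \<omega> T Pr X XX K K' Z ZZ))"
proof -
  note npp = assms(2)
  have XM: "X t \<in> M" if "0 \<le> t" "t \<le> T" for t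
    using assms(6) that unfolding manifold_rough_path_def by auto
  have pz: "pull_trace Pr X G t = 0 \<and> pull_deriv Pr X G G' t = 0"
    if "fixed_by_Q T Pr X G G'" "0 \<le> t" "t \<le> T" for G :: "real \<Rightarrow> real^'d^'e" and G' t
    using pull_zero[where X=X and t=t and H=G and H'=G', OF npp XM[OF that(2,3)]] that unfolding fixed_by_Q_def by auto
  show ?thesis
  proof (intro conjI allI impI)
    fix H :: "real \<Rightarrow> real^'d^'e" and H' Z ZZ
    assume h: "controlled p \<omega> T X H H' \<and> fixed_by_Q T Pr X H H'"
    have "is_constrained_integral p \<omega> T Pr X XX H H' Z ZZ = is_rough_integral p \<omega> T X XX (\<lambda>_. 0) (\<lambda>_. 0) Z ZZ"
      unfolding is_constrained_integral_def by (rule ri_cong) (use pz h in auto)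
    then show "is_constrained_integral p \<omega> T Pr X XX H H' Z ZZ =
         (\<forall>s t. 0 \<le> s \<and> s \<le> t \<and> t \<le> T \<longrightarrow> Z s t = 0 \<and> ZZ s t = 0)"
      using ri_zero[OF assms(5)] by simp
  next
    fix H :: "real \<Rightarrow> real^'d^'e" and H' K K' Z ZZ
    assume h: "controlled p \<omega> T X H H' \<and> controlled p \<omega> T X K K' \<and>
        fixed_by_Q T Pr X (\<lambda>t. K t - H t) (\<lambda>t. K' t - H' t)"
    have lt: "pull_trace Pr X (\<lambda>t. K t - H t) t = pull_trace Pr X K t - pull_trace Pr X H t" for t
      by (simp add: pull_trace_def vec_eq_iff left_diff_distrib sum_subtractf)
    have ld: "pull_deriv Pr X (\<lambda>t. K t - H t) (\<lambda>t. K' t - H' t) t = pull_deriv Pr X K K' t - pull_deriv Pr X H H' t" for t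
      by (simp add: pull_deriv_def vec_eq_iff left_diff_distrib sum_subtractf sum.distrib algebra_simps)
    show "is_constrained_integral p \<omega> T Pr X XX H H' Z ZZ = is_constrained_integral p \<omega> T Pr X XX K K' Z ZZ"
      unfolding is_constrained_integral_def
      by (rule ri_cong) (use pz[OF conjunct2[OF conjunct2[OF h]]] lt ld in auto)
  qed
qed


end
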